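(* Let $\alpha\in(0,1)$ and for $\rho\ge0$ and real $\chi\notin\pi\mathbb{Z}$ let $$I_\alpha(\rho,\chi)=\int_{-\infty}^{+\infty}dy\,e^{i\rho\cosh y}\,\frac{e^{-y\alpha}}{1-e^{-2y-2i\chi}} .$$ Then there is a constant $C$ such that $|I_\alpha(\rho,\chi)|\le C$, and for every $0\le\epsilon<\min(\alpha,1-\alpha)$ there is a constant $C(\epsilon)$ such that $$|I_\alpha(\rho,\chi)-I_\alpha(0,\chi)|\le C(\epsilon)\,\rho^{\epsilon},$$ both estimates holding uniformly in $\rho$ and $\chi$. *)

theory Defs
  imports "HOL-Analysis.Analysis"
begin

definition I_alpha :: "real \<Rightarrow> real \<Rightarrow> real \<Rightarrow> complex" where
  "I_alpha a rho chi =
     (LINT y|lborel. exp (\<i> * complex_of_real (rho * cosh y)) * complex_of_real (exp (- y * a))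
        / (1 - exp (complex_of_real (-2 * y) - 2 * \<i> * complex_of_real chi)))"

end

theory Submission
  imports Defs "HOL-Probability.Sinc_Integral" "HOL-Probability.Characteristic_Functions"
begin

lemma cnorm_sq:
  fixes z :: complex and u :: real
  assumes "cmod z = 1"
  shows "(cmod (1 - of_real u * z))^2 = (1-u)^2 + u * (cmod (1 - z))^2"
proof -
  obtain x y where z: "z = Complex x y" by (cases z)
  have xy: "x^2 + y^2 = 1" using assms by (simp add: z cmod_def)
  have e1: "1 - of_real u * z = Complex (1 - u*x) (-(u*y))" by (simp add: z complex_eq_iff)
  have e2: "1 - z = Complex (1 - x) (- y)" by (simp add: z complex_eq_iff)
  have yy: "y*y = 1 - x*x" using xy by (simp add: power2_eq_square)
  show ?thesis unfolding e1 e2 cmod_power2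
    by (simp add: power2_eq_square algebra_simps yy)
qed

lemma cnorm_sq2:
  fixes z :: complex and u :: real
  assumes "cmod z = 1"
  shows "cmod (of_real u - z) = cmod (1 - of_real u * z)"
proof -
  obtain x y where z: "z = Complex x y" by (cases z)
  have xy: "x^2 + y^2 = 1" using assms by (simp add: z cmod_def)
  have e1: "1 - of_real u * z = Complex (1 - u*x) (-(u*y))" by (simp add: z complex_eq_iff)
  have e2: "of_real u - z = Complex (u - x) (- y)" by (simp add: z complex_eq_iff)
  have yy: "y*y = 1 - x*x" using xy by (simp add: power2_eq_square)
  have "(cmod (of_real u - z))^2 = (cmod (1 - of_real u * z))^2" unfolding e1 e2 cmod_power2
    by (simp add: power2_eq_square algebra_simps yy)
  then show ?thesis by (simp add: power2_eq_iff_nonneg)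
qed

lemma integrable_exp_abs:
  fixes c :: real assumes "c > 0"
  shows "integrable lborel (\<lambda>x. exp (- c * \<bar>x\<bar>))"
proof -
  define h where "h = (\<lambda>x::real. indicator {0<..} x * exp (-(x * c)))"
  have h: "integrable lborel h" using integrable_I0i_exp_mscale[OF assms]
    by (simp add: h_def set_integrable_def mult.commute)
  have g1: "integrable lborel (\<lambda>x. h (1 + 1 * x))"
    by (rule lborel_integrable_real_affine[OF h]) simp
  have g2: "integrable lborel (\<lambda>x. h (1 + (-1) * x))"
    by (rule lborel_integrable_real_affine[OF h]) simp
  have s: "integrable lborel (\<lambda>x. exp c * (h (1 + 1 * x) + h (1 + (-1) * x)))"
    using g1 g2 by auto
  show ?thesis
  proof (rule Bochner_Integration.integrable_bound[OF s])
    show "(\<lambda>x. exp (- c * \<bar>x\<bar>)) \<in> borel_measurable lborel" by measurable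
    show "AE x in lborel. norm (exp (- c * \<bar>x\<bar>)) \<le> norm (exp c * (h (1 + 1 * x) + h (1 + (-1) * x)))"
    proof (rule AE_I2)
      fix x :: real
      have hn: "h t \<ge> 0" for t by (simp add: h_def)
      show "norm (exp (- c * \<bar>x\<bar>)) \<le> norm (exp c * (h (1 + 1 * x) + h (1 + (-1) * x)))"
      proof (cases "x \<ge> 0")
        case True
        have "exp c * h (1 + 1 * x) = exp (- c * \<bar>x\<bar>)"
          using True by (simp add: h_def indicator_def exp_add[symmetric] algebra_simps)
        then show ?thesis using hn[of "1 + (-1)*x"] hn[of "1+1*x"] by (simp add: distrib_left)
      next
        case False
        have "exp c * h (1 + (-1) * x) = exp (- c * \<bar>x\<bar>)"
          using False by (simp add: h_def indicator_def exp_add[symmetric] algebra_simps)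
        then show ?thesis using hn[of "1 + (-1)*x"] hn[of "1+1*x"] by (simp add: distrib_left)
      qed
    qed
  qed
qed

lemma norm_lower1:
  fixes z :: complex and w :: real
  assumes "cmod z = 1" "w \<ge> 0"
  shows "\<bar>1 - w\<bar> \<le> cmod (1 - of_real w * z)"
proof -
  have "(1-w)^2 \<le> (cmod (1 - of_real w * z))^2"
    using cnorm_sq[OF assms(1), of w] assms(2) by simp
  then show ?thesis using real_le_rsqrt by (metis abs_le_square_iff abs_norm_cancel)
qed

lemma sym_bound_small:
  fixes z :: complex and a y :: real
  assumes z: "cmod z = 1" "z \<noteq> 1" and a: "0 < a" "a < 1" and y: "0 \<le> y" "y \<le> 1"
  defines "d \<equiv> cmod (1 - z)" and "c \<equiv> min (4/9) (exp (-2))"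
  shows "cmod (of_real (exp (-y*a)) / (1 - of_real (exp (-2*y)) * z)
             + of_real (exp (y*a)) / (1 - of_real (exp (2*y)) * z))
         \<le> 2 * exp 1 + (2 * exp 1 / c) * (d / (y^2 + d^2))"
proof -
  define u where "u = exp (-2*y)"
  define p where "p = exp (-y*a)"
  define q where "q = exp (y*a)"
  have u0: "0 < u" by (simp add: u_def)
  have u1: "u \<le> 1" using y by (simp add: u_def)
  have ulow: "exp (-2) \<le> u" using y by (simp add: u_def)
  have e2y: "1 + 2*y \<le> exp (2*y)" using exp_ge_add_one_self by blast
  have ueq: "u = 1 / exp (2*y)" by (simp add: u_def exp_minus field_simps)
  have "u \<le> 1 / (1 + 2*y)" unfolding ueq using e2y y by (intro divide_left_mono) auto
  then have "1 - u \<ge> 1 - 1/(1+2*y)" by linarith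
  moreover have "1 - 1/(1+2*y) = 2*y/(1+2*y)" using y by (simp add: field_simps)
  moreover have "2*y/(1+2*y) \<ge> 2*y/3" using y by (intro divide_left_mono) auto
  ultimately have su: "1 - u \<ge> 2*y/3" by linarith
  have d0: "d > 0" using z by (simp add: d_def)
  have d2: "d \<le> 2" unfolding d_def using norm_triangle_ineq4[of 1 z] z by simp
  have c0: "c > 0" by (simp add: c_def)
  define D where "D = (1-u)^2 + u * d^2"
  have D0: "D > 0" using u0 d0 by (simp add: D_def add_nonneg_pos)
  have "(1-u)^2 \<ge> (2*y/3)^2" using su y by (intro power_mono) auto
  then have "(1-u)^2 \<ge> (4/9) * y^2" by (simp add: power2_eq_square)
  moreover have "(4/9) * y^2 \<ge> c * y^2" by (rule mult_right_mono) (auto simp: c_def)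
  moreover have "u * d^2 \<ge> c * d^2" using ulow by (intro mult_right_mono) (auto simp: c_def)
  ultimately have Dc: "D \<ge> c * (y^2 + d^2)" by (simp add: D_def distrib_left)
  define A where "A = 1 - of_real u * z"
  define B where "B = of_real u - z"
  have nA: "(cmod A)^2 = D" using cnorm_sq[OF z(1), of u] by (simp add: A_def D_def d_def)
  have nB: "cmod B = cmod A" using cnorm_sq2[OF z(1), of u] by (simp add: A_def B_def)
  have A0: "A \<noteq> 0" using nA D0 by auto
  have B0: "B \<noteq> 0" using nB A0 by auto
  have nAB: "cmod (A * B) = D" using nA nB by (simp add: norm_mult power2_eq_square)
  have eq2: "1 - of_real (exp (2*y)) * z = B / of_real u"
    using u0 by (simp add: B_def ueq field_simps)
  define N where "N = of_real (1 + u^2) * (1 - z) - of_real ((1-u)^2)"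
  have Seq: "of_real p / A + of_real q / (B / of_real u)
       = (of_real p - of_real q) / A + of_real q * (N / (A * B))"
  proof -
    have N_eq: "N = B + of_real u * A"
      by (simp add: N_def A_def B_def algebra_simps power2_eq_square)
    have h1: "1/A + of_real u / B = N/(A*B)" using A0 B0 by (simp add: N_eq field_simps)
    have h2: "of_real q / (B / of_real u) = of_real q * (of_real u / B)" using u0 by simp
    have h3: "of_real p / A = (of_real p - of_real q)/A + of_real q * (1/A)"
      by (simp add: diff_divide_distrib)
    show ?thesis unfolding h2 h3 h1[symmetric] by (simp add: distrib_left)
  qed
  have nN: "cmod N \<le> (1 + u^2) * d + (1-u)^2"
    unfolding N_def d_def
    by (rule order_trans[OF norm_triangle_ineq4]) (simp only: norm_mult norm_of_real, simp)
  have "(1 + u^2) * d \<le> 2 * d" using u0 u1 d0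
    by (intro mult_right_mono) (auto simp: power2_eq_square mult_le_one)
  moreover have "u * d^2 \<ge> 0" using u0 by simp
  ultimately have "(1 + u^2) * d + (1-u)^2 \<le> D + 2 * d" unfolding D_def by linarith
  then have "cmod (N / (A * B)) \<le> (D + 2*d) / D"
    using nN D0 by (simp add: norm_divide nAB divide_right_mono)
  also have "\<dots> = 1 + 2*d/D" using D0 by (simp add: field_simps)
  also have "2*d/D \<le> 2*d/(c * (y^2 + d^2))"
    using Dc d0 c0 D0 by (intro divide_left_mono) (auto intro!: mult_pos_pos add_nonneg_pos)
  also have "\<dots> = (2/c) * (d/(y^2+d^2))" by simp
  finally have nT: "cmod (N / (A * B)) \<le> 1 + (2/c) * (d/(y^2+d^2))" by simp
  have pq: "\<bar>p - q\<bar> \<le> exp y - exp (-y)"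
  proof -
    have "q \<le> exp y" using a y by (simp add: q_def mult_left_le)
    moreover have "exp (-y) \<le> p" using a y by (simp add: p_def mult_left_le)
    moreover have "p \<le> q" using a y by (simp add: p_def q_def)
    ultimately show ?thesis by simp
  qed
  have "exp y - exp (-y) = exp y * (1 - u)"
    by (simp add: u_def right_diff_distrib exp_add[symmetric])
  also have "\<dots> \<le> exp y * cmod A" using norm_lower1[OF z(1), of u] u0
    by (intro mult_left_mono) (auto simp: A_def)
  finally have "cmod (of_real p - of_real q) \<le> exp y * cmod A" using pq
    by (metis norm_of_real of_real_diff order_trans)
  then have n1: "cmod ((of_real p - of_real q) / A) \<le> exp y"
    using A0 by (simp add: norm_divide divide_le_eq)
  have ey: "exp y \<le> exp 1" using y by simp
  have q1: "q \<le> exp 1" using a y by (simp add: q_def mult_le_one)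
  have "cmod ((of_real p - of_real q) / A + of_real q * (N / (A * B)))
        \<le> exp 1 + exp 1 * (1 + (2/c) * (d/(y^2+d^2)))"
  proof (rule order_trans[OF norm_triangle_ineq], rule add_mono)
    show "cmod ((of_real p - of_real q) / A) \<le> exp 1" using n1 ey by linarith
    have "cmod (of_real q * (N / (A * B))) = q * cmod (N / (A * B))"
      by (simp only: norm_mult norm_of_real q_def, simp)
    also have "\<dots> \<le> exp 1 * (1 + (2/c) * (d/(y^2+d^2)))"
      using q1 nT by (intro mult_mono) (auto simp: q_def)
    finally show "cmod (of_real q * (N / (A * B))) \<le> exp 1 * (1 + (2/c) * (d/(y^2+d^2)))" .
  qed
  also have "\<dots> = 2 * exp 1 + (2 * exp 1 / c) * (d / (y^2 + d^2))"
    by (simp add: algebra_simps)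
  finally show ?thesis using Seq eq2 by (simp add: p_def q_def u_def A_def)
qed

lemma lower_all:
  fixes z :: complex and u :: real
  assumes z: "cmod z = 1" and u: "u > 0"
  shows "sqrt (min (1/4) ((cmod (1 - z))^2/2)) * max 1 u \<le> cmod (1 - of_real u * z)"
proof -
  define d where "d = cmod (1 - z)"
  have d2: "d \<le> 2" unfolding d_def using norm_triangle_ineq4[of 1 z] z by simp
  have d0: "d \<ge> 0" by (simp add: d_def)
  define m2 where "m2 = min (1/4) (d^2/2)"
  have m0: "m2 \<ge> 0" by (simp add: m2_def)
  have key: "m2 * (max 1 u)^2 \<le> (1-u)^2 + u * d^2"
  proof (cases "u \<le> 1")
    case True
    then have mx: "max 1 u = 1" by simp
    show ?thesis
    proof (cases "u \<le> 1/2")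
      case True
      have "(1-u)^2 \<ge> (1/2)^2" using True by (intro power_mono) auto
      moreover have "u * d^2 \<ge> 0" using u by simp
      ultimately show ?thesis using mx by (simp add: m2_def power2_eq_square)
    next
      case False
      have "u * d^2 \<ge> (1/2) * d^2" using False by (intro mult_right_mono) auto
      moreover have "m2 \<le> d^2/2" by (simp add: m2_def)
      moreover have "(1-u)^2 \<ge> 0" by simp
      ultimately show ?thesis unfolding mx power_one mult_1_right by linarith
    qed
  next
    case False
    then have mx: "max 1 u = u" by simp
    show ?thesis
    proof (cases "u \<le> 2")
      case True
      have "u * d^2 \<ge> (u^2/2) * d^2" using True u False
        by (intro mult_right_mono) (auto simp: power2_eq_square)
      moreover have "m2 * u^2 \<le> (d^2/2) * u^2" by (intro mult_right_mono) (auto simp: m2_def)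
      moreover have "(1-u)^2 \<ge> 0" by simp
      moreover have "(d^2/2)*u^2 = (u^2/2)*d^2" by simp
      ultimately show ?thesis unfolding mx by linarith
    next
      case False
      have "(u-1)^2 \<ge> (u/2)^2" using False by (intro power_mono) auto
      moreover have "m2 * u^2 \<le> (1/4) * u^2" by (intro mult_right_mono) (auto simp: m2_def)
      moreover have "u * d^2 \<ge> 0" using u by simp
      ultimately show ?thesis using mx by (simp add: power2_eq_square algebra_simps)
    qed
  qed
  have "sqrt m2 * max 1 u = sqrt (m2 * (max 1 u)^2)"
    using u by (simp add: real_sqrt_mult)
  also have "\<dots> \<le> sqrt ((cmod (1 - of_real u * z))^2)"
    using key cnorm_sq[OF z, of u] by (simp add: d_def)
  also have "\<dots> = cmod (1 - of_real u * z)" by simp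
  finally show ?thesis by (simp add: m2_def d_def)
qed

lemma f_bound:
  fixes z :: complex and a y :: real
  assumes z: "cmod z = 1" and a: "0 < a" "a < 1"
  defines "m \<equiv> sqrt (min (1/4) ((cmod (1 - z))^2/2))"
  assumes m: "m > 0"
  shows "cmod (of_real (exp (-y*a)) / (1 - of_real (exp (-2*y)) * z)) \<le> exp (- a * \<bar>y\<bar>) / m"
proof -
  define u where "u = exp (-2*y)"
  have u0: "u > 0" by (simp add: u_def)
  have L: "m * max 1 u \<le> cmod (1 - of_real u * z)" using lower_all[OF z u0] by (simp add: m_def)
  have mx: "m * max 1 u > 0" using m by (simp add: max_def)
  have "cmod (of_real (exp (-y*a)) / (1 - of_real u * z)) = exp (-y*a) / cmod (1 - of_real u * z)"
    by (simp add: norm_divide)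
  also have "\<dots> \<le> exp (-y*a) / (m * max 1 u)"
    using L mx by (intro divide_left_mono) (auto intro!: mult_pos_pos)
  also have "\<dots> \<le> exp (- a * \<bar>y\<bar>) / m"
  proof (cases "y \<ge> 0")
    case True
    then have "u \<le> 1" by (simp add: u_def)
    then show ?thesis using True m by (simp add: max_def mult.commute)
  next
    case False
    then have "u \<ge> 1" by (simp add: u_def)
    then have "exp (-y*a) / (m * max 1 u) = exp (-y*a + 2*y) / m"
      using m by (simp add: u_def exp_add[symmetric] exp_minus[symmetric] exp_diff[symmetric] field_simps)
    also have "\<dots> \<le> exp (- a * \<bar>y\<bar>) / m"
      using False a m by (intro divide_right_mono) (auto simp: abs_if algebra_simps mult_left_le)
    finally show ?thesis .
  qed
  finally show ?thesis by (simp add: u_def)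
qed

lemma sym_bound_large:
  fixes z :: complex and a y :: real
  assumes z: "cmod z = 1" and a: "0 < a" "a < 1" and y: "1 \<le> y"
  shows "cmod (of_real (exp (-y*a)) / (1 - of_real (exp (-2*y)) * z)
             + of_real (exp (y*a)) / (1 - of_real (exp (2*y)) * z))
         \<le> 4 * exp (- a * y)"
proof -
  have e2y: "1 + 2*y \<le> exp (2*y)" using exp_ge_add_one_self by blast
  define u where "u = exp (-2*y)"
  have u0: "u > 0" by (simp add: u_def)
  have ueq: "u = 1 / exp (2*y)" by (simp add: u_def exp_minus field_simps)
  have e3: "exp (2*y) \<ge> 3" using e2y y by linarith
  have "u \<le> 1/3" unfolding ueq using e3 by (intro divide_left_mono) auto
  then have h1: "1/2 \<le> cmod (1 - of_real u * z)" using norm_lower1[OF z, of u] u0 by simp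
  have n1: "cmod (of_real (exp (-y*a)) / (1 - of_real u * z)) \<le> 2 * exp (- a * y)"
  proof -
    have "cmod (of_real (exp (-y*a)) / (1 - of_real u * z)) = exp (-y*a) / cmod (1 - of_real u * z)"
      by (simp add: norm_divide)
    also have "\<dots> \<le> exp (-y*a) / (1/2)" using h1 by (intro divide_left_mono) auto
    finally show ?thesis by (simp add: mult.commute)
  qed
  define U where "U = exp (2*y)"
  have U3: "U \<ge> 3" using e2y y unfolding U_def by linarith
  have h2: "U/2 \<le> cmod (1 - of_real U * z)" using norm_lower1[OF z, of U] U3 by simp
  have cp: "cmod (1 - of_real U * z) > 0" using h2 U3 by linarith
  have n2: "cmod (of_real (exp (y*a)) / (1 - of_real U * z)) \<le> 2 * exp (- a * y)"
  proof -
    have "cmod (of_real (exp (y*a)) / (1 - of_real U * z)) = exp (y*a) / cmod (1 - of_real U * z)"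
      by (simp add: norm_divide)
    also have "\<dots> \<le> exp (y*a) / (U/2)" using h2 U3 cp by (intro divide_left_mono) (auto intro!: mult_pos_pos)
    also have "\<dots> = 2 * exp (y*a - 2*y)" by (simp add: U_def exp_diff)
    also have "\<dots> \<le> 2 * exp (- a * y)" using a y by (simp add: algebra_simps mult_left_le)
    finally show ?thesis .
  qed
  show ?thesis using norm_triangle_le[OF add_mono[OF n1 n2]] by (simp add: u_def U_def)
qed

lemma arctan_int:
  fixes d :: real assumes d: "d > 0"
  shows "integral\<^sup>L lborel (\<lambda>y. indicator {-1..1} y *\<^sub>R (d / (y^2 + d^2))) \<le> pi"
    and "integrable lborel (\<lambda>y. indicator {-1..1} y *\<^sub>R (d / (y^2 + d^2)))"
proof -
  have cont: "continuous_on {-1..1} (\<lambda>y. d / (y^2 + d^2))"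
  proof (intro continuous_intros ballI)
    fix y :: real
    have "y^2 + d^2 > 0" using d by (simp add: add_nonneg_pos)
    then show "y^2 + d^2 \<noteq> 0" by (metis order_less_irrefl)
  qed
  have "integral\<^sup>L lborel (\<lambda>y. indicator {-1..1} y *\<^sub>R (d / (y^2 + d^2))) = arctan (1/d) - arctan (-1/d)"
  proof (rule integral_FTC_atLeastAtMost[where F="\<lambda>y. arctan (y/d)"])
    fix x :: real
    have "((\<lambda>y. arctan (y/d)) has_real_derivative (inverse (1 + (x/d)^2) * (1/d))) (at x)"
      using d by (auto intro!: derivative_eq_intros)
    moreover have "inverse (1 + (x/d)^2) * (1/d) = d / (x^2 + d^2)"
      using d by (simp add: field_simps power2_eq_square)
    ultimately show "((\<lambda>y. arctan (y/d)) has_vector_derivative d / (x^2 + d^2)) (at x within {-1..1})"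
      by (auto simp: has_real_derivative_iff_has_vector_derivative intro: has_vector_derivative_at_within)
  qed (use cont in auto)
  also have "\<dots> \<le> pi" using arctan_bounded[of "1/d"] arctan_bounded[of "-1/d"] by linarith
  finally show "integral\<^sup>L lborel (\<lambda>y. indicator {-1..1} y *\<^sub>R (d / (y^2 + d^2))) \<le> pi" .
  show "integrable lborel (\<lambda>y. indicator {-1..1} y *\<^sub>R (d / (y^2 + d^2)))"
    using borel_integrable_atLeastAtMost'[OF cont] by (simp add: set_integrable_def)
qed

definition Hf :: "real \<Rightarrow> real \<Rightarrow> real \<Rightarrow> real" where
  "Hf a eps y = indicator {-1..1} y * (2 * exp 1 * exp 1) + 4 * exp ((eps - a) * \<bar>y\<bar>)"

definition Kc :: real where "Kc = 2 * exp 1 / min (4/9) (exp (-2))"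

lemma Hf_integrable:
  assumes "eps < a"
  shows "integrable lborel (Hf a eps)"
proof -
  have "integrable lborel (\<lambda>y. exp (- (a - eps) * \<bar>y\<bar>))"
    using assms by (intro integrable_exp_abs) auto
  moreover have "integrable lborel (\<lambda>y::real. indicator {-1..1} y * (2 * exp 1 * exp 1 :: real))"
    by (intro integrable_mult_left integrable_real_indicator) auto
  ultimately show ?thesis unfolding Hf_def by (auto simp: algebra_simps)
qed

lemma sym_bound:
  fixes z :: complex and a y eps :: real
  assumes z: "cmod z = 1" "z \<noteq> 1" and a: "0 < a" "a < 1" and e: "0 \<le> eps" "eps < a"
  defines "d \<equiv> cmod (1 - z)"
  shows "cmod (of_real (exp (-y*a)) / (1 - of_real (exp (-2*y)) * z)
             + of_real (exp (y*a)) / (1 - of_real (exp (2*y)) * z)) * exp (eps * \<bar>y\<bar>)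
         \<le> Hf a eps y + exp 1 * Kc * (indicator {-1..1} y * (d / (y^2 + d^2)))"
proof -
  define t where "t = \<bar>y\<bar>"
  have t0: "t \<ge> 0" by (simp add: t_def)
  have sw: "cmod (of_real (exp (-y*a)) / (1 - of_real (exp (-2*y)) * z)
             + of_real (exp (y*a)) / (1 - of_real (exp (2*y)) * z))
          = cmod (of_real (exp (-t*a)) / (1 - of_real (exp (-2*t)) * z)
             + of_real (exp (t*a)) / (1 - of_real (exp (2*t)) * z))"
    by (cases "y \<ge> 0") (auto simp: t_def add.commute)
  have ind: "indicator {-1..1} y = (indicator {-1..1} t :: real)"
    by (auto simp: t_def indicator_def)
  have y2: "y^2 = t^2" by (simp add: t_def)
  have d0: "d > 0" using z by (simp add: d_def)
  have Kc0: "Kc > 0" by (simp add: Kc_def)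
  have Hpos: "0 \<le> indicator {-1..1} t * (2 * exp 1 * exp 1 :: real)" by simp
  have Rpos: "0 \<le> exp 1 * Kc * (indicator {-1..1} t * (d / (t^2 + d^2)))"
    using Kc0 d0 by (simp add: add_nonneg_pos)
  have X: "cmod (of_real (exp (-t*a)) / (1 - of_real (exp (-2*t)) * z)
             + of_real (exp (t*a)) / (1 - of_real (exp (2*t)) * z)) * exp (eps * t)
          \<le> Hf a eps t + exp 1 * Kc * (indicator {-1..1} t * (d / (t^2 + d^2)))"
  proof (cases "t \<le> 1")
    case True
    have S: "cmod (of_real (exp (-t*a)) / (1 - of_real (exp (-2*t)) * z)
             + of_real (exp (t*a)) / (1 - of_real (exp (2*t)) * z))
          \<le> 2 * exp 1 + Kc * (d / (t^2 + d^2))"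
      using sym_bound_small[OF z a t0 True] by (simp add: Kc_def d_def)
    have E: "exp (eps * t) \<le> exp 1" using e a True t0
      by (simp add: mult_le_one)
    have "cmod (of_real (exp (-t*a)) / (1 - of_real (exp (-2*t)) * z)
             + of_real (exp (t*a)) / (1 - of_real (exp (2*t)) * z)) * exp (eps * t)
          \<le> (2 * exp 1 + Kc * (d / (t^2 + d^2))) * exp 1"
    proof (rule mult_mono[OF S E])
      have "0 \<le> Kc * (d / (t^2 + d^2))" using Kc0 d0 by simp
      moreover have "0 < exp (1::real)" by simp
      ultimately show "0 \<le> 2 * exp 1 + Kc * (d / (t^2 + d^2))" by linarith
    qed simp
    also have "\<dots> = indicator {-1..1} t * (2 * exp 1 * exp 1) + exp 1 * Kc * (indicator {-1..1} t * (d / (t^2 + d^2)))"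
      using True t0 by (simp add: algebra_simps indicator_def)
    also have "\<dots> \<le> Hf a eps t + exp 1 * Kc * (indicator {-1..1} t * (d / (t^2 + d^2)))"
      by (simp add: Hf_def)
    finally show ?thesis .
  next
    case False
    have S: "cmod (of_real (exp (-t*a)) / (1 - of_real (exp (-2*t)) * z)
             + of_real (exp (t*a)) / (1 - of_real (exp (2*t)) * z))
          \<le> 4 * exp (- a * t)"
      using sym_bound_large[OF z(1) a, of t] False by simp
    have "cmod (of_real (exp (-t*a)) / (1 - of_real (exp (-2*t)) * z)
             + of_real (exp (t*a)) / (1 - of_real (exp (2*t)) * z)) * exp (eps * t)
          \<le> 4 * exp (- a * t) * exp (eps * t)"
      using S by (intro mult_right_mono) auto
    also have "\<dots> = 4 * exp ((eps - a) * t)" by (simp add: exp_add[symmetric] algebra_simps)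
    also have "\<dots> \<le> Hf a eps t + exp 1 * Kc * (indicator {-1..1} t * (d / (t^2 + d^2)))"
      using Rpos by (simp add: Hf_def t_def)
    finally show ?thesis .
  qed
  have Hy: "Hf a eps y = Hf a eps t" by (simp add: Hf_def ind t_def)
  have ey: "exp (eps * \<bar>y\<bar>) = exp (eps * t)" by (simp add: t_def)
  show ?thesis unfolding sw Hy ind y2 ey by (rule X)
qed

definition Cst :: "real \<Rightarrow> real \<Rightarrow> real" where
  "Cst a eps = (integral\<^sup>L lborel (Hf a eps) + exp 1 * Kc * pi) / 2"

lemma main:
  fixes a eps chi M :: real and k :: "real \<Rightarrow> complex"
  assumes a: "0 < a" "a < 1" and e: "0 \<le> eps" "eps < a"
    and chi: "\<forall>j::int. chi \<noteq> pi * of_int j"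
    and km[measurable]: "k \<in> borel_measurable borel"
    and ev: "\<And>y. k (-y) = k y" and kb: "\<And>y. cmod (k y) \<le> M * exp (eps * \<bar>y\<bar>)"
  defines "g \<equiv> (\<lambda>y. k y * complex_of_real (exp (- y * a))
        / (1 - exp (complex_of_real (-2 * y) - 2 * \<i> * complex_of_real chi)))"
  shows "integrable lborel g" and "cmod (integral\<^sup>L lborel g) \<le> M * Cst a eps"
proof -
  define z where "z = exp (- (2 * \<i> * complex_of_real chi))"
  have hz: "exp (complex_of_real (-2 * y) - 2 * \<i> * complex_of_real chi) = of_real (exp (-2*y)) * z" for y
    by (simp only: z_def diff_conv_add_uminus exp_add exp_of_real)
  have nz: "cmod z = 1" by (simp add: z_def)
  have z1: "z \<noteq> 1"
  proof
    assume "z = 1"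
    then obtain n :: int where n: "Im (- (2 * \<i> * complex_of_real chi)) = of_int (2 * n) * pi"
      unfolding z_def exp_eq_1 by blast
    then have "chi = pi * of_int (- n)" by simp
    with chi show False by blast
  qed
  define d where "d = cmod (1 - z)"
  have d0: "d > 0" using z1 by (simp add: d_def)
  define m where "m = sqrt (min (1/4) ((cmod (1 - z))^2/2))"
  have m0: "m > 0" using d0 by (simp add: m_def d_def)
  define fz where "fz = (\<lambda>y. of_real (exp (-y*a)) / (1 - of_real (exp (-2*y)) * z))"
  have gfz: "g y = k y * fz y" for y unfolding g_def hz fz_def by simp
  have "cmod (k 0) \<le> M" using kb[of 0] by simp
  then have M0: "M \<ge> 0" using norm_ge_zero[of "k 0"] by linarith
  have gm[measurable]: "g \<in> borel_measurable lborel" unfolding g_def by measurable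
  have gb: "norm (g y) \<le> (M / m) * exp (- (a - eps) * \<bar>y\<bar>)" for y
  proof -
    have "norm (g y) = cmod (k y) * cmod (fz y)" by (simp add: gfz norm_mult)
    also have "\<dots> \<le> (M * exp (eps * \<bar>y\<bar>)) * (exp (- a * \<bar>y\<bar>) / m)"
      using kb[of y] f_bound[OF nz a, of y] m0 M0 unfolding fz_def m_def
      by (intro mult_mono) auto
    also have "\<dots> = (M / m) * exp (- (a - eps) * \<bar>y\<bar>)"
      by (simp add: exp_add[symmetric] algebra_simps)
    finally show ?thesis .
  qed
  have gi: "integrable lborel g"
  proof (rule Bochner_Integration.integrable_bound[OF _ gm])
    show "integrable lborel (\<lambda>y. (M / m) * exp (- (a - eps) * \<bar>y\<bar>))"
      using e by (intro integrable_mult_right integrable_exp_abs) auto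
    show "AE y in lborel. norm (g y) \<le> norm ((M / m) * exp (- (a - eps) * \<bar>y\<bar>))"
      using gb M0 m0 by (intro AE_I2) (auto intro: order_trans)
  qed
  then show "integrable lborel g" .
  have gni: "integrable lborel (\<lambda>y. g (0 + (-1) * y))"
    by (rule lborel_integrable_real_affine[OF gi]) simp
  have refl: "integral\<^sup>L lborel g = integral\<^sup>L lborel (\<lambda>y. g (0 + (-1) * y))"
    using lborel_integral_real_affine[of "-1" g 0] by simp
  have "integral\<^sup>L lborel g = (integral\<^sup>L lborel g + integral\<^sup>L lborel (\<lambda>y. g (0 + (-1) * y))) / 2"
    using refl by simp
  also have "\<dots> = integral\<^sup>L lborel (\<lambda>y. (g y + g (0 + (-1) * y)) / 2)"
    using gi gni by (simp add: integral_add integral_divide_zero)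
  finally have I: "integral\<^sup>L lborel g = integral\<^sup>L lborel (\<lambda>y. (g y + g (0 + (-1) * y)) / 2)" .
  have si: "integrable lborel (\<lambda>y. (g y + g (0 + (-1) * y)) / 2)"
    using gi gni by auto
  define R where "R = (\<lambda>y. (M/2) * (Hf a eps y + exp 1 * Kc * (indicator {-1..1} y * (d / (y^2 + d^2)))))"
  have pw: "norm ((g y + g (0 + (-1) * y)) / 2) \<le> R y" for y
  proof -
    have eq: "(g y + g (0 + (-1) * y)) / 2 = k y * (fz y + fz (-y)) / 2"
      by (simp add: gfz ev distrib_left)
    have "norm ((g y + g (0 + (-1) * y)) / 2) = norm (k y * (fz y + fz (-y)) / 2)"
      by (simp only: eq)
    also have "\<dots> = cmod (k y) * cmod (fz y + fz (-y)) / 2"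
      by (simp add: norm_mult norm_divide)
    also have "\<dots> \<le> (M * exp (eps * \<bar>y\<bar>)) * cmod (fz y + fz (-y)) / 2"
      using kb[of y] by (intro divide_right_mono mult_right_mono) auto
    also have "\<dots> = (M/2) * (cmod (fz y + fz (-y)) * exp (eps * \<bar>y\<bar>))"
      by (simp add: algebra_simps)
    also have "\<dots> \<le> R y"
      unfolding R_def using sym_bound[OF nz z1 a e, of y] M0
      by (intro mult_left_mono) (auto simp: fz_def d_def)
    finally show ?thesis .
  qed
  have ai: "integrable lborel (\<lambda>y. indicator {-1..1} y *\<^sub>R (d / (y^2 + d^2)))"
    using arctan_int(2)[OF d0] .
  have aI: "integral\<^sup>L lborel (\<lambda>y. indicator {-1..1} y *\<^sub>R (d / (y^2 + d^2))) \<le> pi"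
    using arctan_int(1)[OF d0] .
  have Hi: "integrable lborel (Hf a eps)" using Hf_integrable[OF e(2)] .
  have ai': "integrable lborel (\<lambda>y. indicator {-1..1} y * (d / (y^2 + d^2)))"
    using ai unfolding real_scaleR_def .
  have Ri: "integrable lborel R"
  proof -
    have "integrable lborel (\<lambda>y. exp 1 * Kc * (indicator {-1..1} y * (d / (y^2 + d^2))))"
      using ai' by (rule Bochner_Integration.integrable_mult_right)
    then have "integrable lborel (\<lambda>y. Hf a eps y + exp 1 * Kc * (indicator {-1..1} y * (d / (y^2 + d^2))))"
      using Hi by (rule Bochner_Integration.integrable_add[rotated])
    then show ?thesis unfolding R_def by (rule Bochner_Integration.integrable_mult_right)
  qed
  have RI: "integral\<^sup>L lborel R
      = (M/2) * (integral\<^sup>L lborel (Hf a eps) + exp 1 * Kc * integral\<^sup>L lborel (\<lambda>y. indicator {-1..1} y *\<^sub>R (d / (y^2 + d^2))))"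
  proof -
    have i2: "integrable lborel (\<lambda>y. exp 1 * Kc * (indicator {-1..1} y * (d / (y^2 + d^2))))"
      using ai' by (rule Bochner_Integration.integrable_mult_right)
    show ?thesis unfolding R_def real_scaleR_def
      by (simp only: integral_mult_right_zero Bochner_Integration.integral_add[OF Hi i2])
  qed
  have "cmod (integral\<^sup>L lborel g) \<le> integral\<^sup>L lborel (\<lambda>y. norm ((g y + g (0 + (-1) * y)) / 2))"
    unfolding I by (rule integral_norm_bound)
  also have "\<dots> \<le> integral\<^sup>L lborel R"
    using Bochner_Integration.integrable_norm[OF si] Ri pw by (rule integral_mono)
  also have "\<dots> \<le> (M/2) * (integral\<^sup>L lborel (Hf a eps) + exp 1 * Kc * pi)"
    unfolding RI using aI M0 by (intro mult_left_mono add_left_mono) (auto simp: Kc_def)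
  also have "\<dots> = M * Cst a eps" by (simp add: Cst_def)
  finally show "cmod (integral\<^sup>L lborel g) \<le> M * Cst a eps" .
qed

lemma iexp_minus_one: "cmod (exp (\<i> * complex_of_real t) - 1) \<le> \<bar>t\<bar>"
  using iexp_approx1[of t 0] by simp

lemma kb2:
  fixes rho eps y :: real
  assumes r: "rho \<ge> 0" and e: "0 \<le> eps" "eps < 1"
  shows "cmod (exp (\<i> * complex_of_real (rho * cosh y)) - 1) \<le> 2 * rho powr eps * exp (eps * \<bar>y\<bar>)"
proof (cases "rho = 0")
  case True then show ?thesis by simp
next
  case False
  then have r0: "rho > 0" using r by simp
  define x where "x = rho * cosh y"
  have ch: "cosh y > 0" by (simp add: cosh_real_pos)
  have x0: "x > 0" using r0 ch by (simp add: x_def)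
  have n1: "cmod (exp (\<i> * complex_of_real x) - 1) \<le> x"
    using iexp_minus_one[of x] x0 by simp
  have n2: "cmod (exp (\<i> * complex_of_real x) - 1) \<le> 2"
    using norm_triangle_ineq4[of "exp (\<i> * complex_of_real x)" 1] by simp
  have "min 2 x \<le> 2 * x powr eps"
  proof (cases "x \<le> 1")
    case True
    have "x = x powr 1" using x0 by simp
    also have "\<dots> \<le> x powr eps" using True x0 e by (intro powr_mono') auto
    finally show ?thesis using x0 by (simp add: min_def)
  next
    case False
    then have "1 \<le> x powr eps" using e by (intro ge_one_powr_ge_zero) auto
    then show ?thesis by (simp add: min_def)
  qed
  also have "x powr eps = rho powr eps * cosh y powr eps"
    using r0 ch by (simp add: x_def powr_mult)
  also have "cosh y powr eps \<le> exp \<bar>y\<bar> powr eps"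
  proof (intro powr_mono2 e(1))
    show "0 \<le> cosh y" using ch by simp
    show "cosh y \<le> exp \<bar>y\<bar>"
      by (cases "y \<ge> 0") (auto simp: cosh_def)
  qed
  also have "exp \<bar>y\<bar> powr eps = exp (eps * \<bar>y\<bar>)" by (simp add: powr_def mult.commute)
  finally have "min 2 x \<le> 2 * (rho powr eps * exp (eps * \<bar>y\<bar>))"
    using r0 by (simp add: mult_left_mono)
  then show ?thesis using n1 n2 unfolding x_def by (simp add: min_def split: if_splits)
qed

theorem lemma2:
  fixes a :: real
  assumes "0 < a" and "a < 1"
  shows "(\<exists>C. \<forall>rho chi. rho \<ge> 0 \<and> (\<forall>k::int. chi \<noteq> pi * of_int k)
            \<longrightarrow> cmod (I_alpha a rho chi) \<le> C)
       \<and> (\<forall>eps. 0 \<le> eps \<and> eps < min a (1 - a) \<longrightarrow>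
            (\<exists>C. \<forall>rho chi. rho \<ge> 0 \<and> (\<forall>k::int. chi \<noteq> pi * of_int k)
               \<longrightarrow> cmod (I_alpha a rho chi - I_alpha a 0 chi) \<le> C * rho powr eps))"
proof -
  have a: "0 < a" "a < 1" using assms by auto
  have meas: "(\<lambda>y. exp (\<i> * complex_of_real (rho * cosh y))) \<in> borel_measurable borel" for rho :: real
    by (intro borel_measurable_continuous_onI continuous_intros)
  have part1: "integrable lborel (\<lambda>y. exp (\<i> * complex_of_real (rho * cosh y)) * complex_of_real (exp (- y * a))
        / (1 - exp (complex_of_real (-2 * y) - 2 * \<i> * complex_of_real chi)))
     \<and> cmod (I_alpha a rho chi) \<le> 1 * Cst a 0"
    if chi: "\<forall>k::int. chi \<noteq> pi * of_int k" for rho chi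
  proof -
    have ev: "\<And>y. exp (\<i> * complex_of_real (rho * cosh (-y))) = exp (\<i> * complex_of_real (rho * cosh y))"
      by simp
    have kb: "\<And>y. cmod (exp (\<i> * complex_of_real (rho * cosh y))) \<le> 1 * exp (0 * \<bar>y\<bar>)"
      by simp
    note M = main[of a 0 chi "\<lambda>y. exp (\<i> * complex_of_real (rho * cosh y))" 1,
        OF a(1) a(2) order_refl a(1) chi meas[of rho] ev kb]
    show ?thesis using M unfolding I_alpha_def by simp
  qed
  show ?thesis
  proof
    show "\<exists>C. \<forall>rho chi. rho \<ge> 0 \<and> (\<forall>k::int. chi \<noteq> pi * of_int k)
            \<longrightarrow> cmod (I_alpha a rho chi) \<le> C"
      using part1 by (intro exI[of _ "Cst a 0"]) auto
  next
    show "\<forall>eps. 0 \<le> eps \<and> eps < min a (1 - a) \<longrightarrow>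
            (\<exists>C. \<forall>rho chi. rho \<ge> 0 \<and> (\<forall>k::int. chi \<noteq> pi * of_int k)
               \<longrightarrow> cmod (I_alpha a rho chi - I_alpha a 0 chi) \<le> C * rho powr eps)"
    proof (intro allI impI)
      fix eps :: real
      assume "0 \<le> eps \<and> eps < min a (1 - a)"
      then have e: "0 \<le> eps" "eps < a" by auto
      show "\<exists>C. \<forall>rho chi. rho \<ge> 0 \<and> (\<forall>k::int. chi \<noteq> pi * of_int k)
               \<longrightarrow> cmod (I_alpha a rho chi - I_alpha a 0 chi) \<le> C * rho powr eps"
      proof (intro exI[of _ "2 * Cst a eps"] allI impI)
        fix rho chi :: real
        assume rc: "rho \<ge> 0 \<and> (\<forall>k::int. chi \<noteq> pi * of_int k)"
        then have r: "rho \<ge> 0" and chi: "\<forall>k::int. chi \<noteq> pi * of_int k" by auto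
        define F where "F = (\<lambda>y. complex_of_real (exp (- y * a))
           / (1 - exp (complex_of_real (-2 * y) - 2 * \<i> * complex_of_real chi)))"
        have i1: "integrable lborel (\<lambda>y. exp (\<i> * complex_of_real (rho * cosh y)) * F y)"
          using part1[OF chi, of rho] by (simp add: F_def times_divide_eq_right)
        have i0: "integrable lborel (\<lambda>y. exp (\<i> * complex_of_real (0 * cosh y)) * F y)"
          using part1[OF chi, of 0] by (simp add: F_def times_divide_eq_right)
        have I1: "I_alpha a rho chi = integral\<^sup>L lborel (\<lambda>y. exp (\<i> * complex_of_real (rho * cosh y)) * F y)"
          by (simp add: I_alpha_def F_def times_divide_eq_right)
        have I0: "I_alpha a 0 chi = integral\<^sup>L lborel (\<lambda>y. exp (\<i> * complex_of_real (0 * cosh y)) * F y)"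
          by (simp add: I_alpha_def F_def times_divide_eq_right)
        have "I_alpha a rho chi - I_alpha a 0 chi
            = integral\<^sup>L lborel (\<lambda>y. (exp (\<i> * complex_of_real (rho * cosh y)) - 1) * F y)"
          unfolding I1 I0 using Bochner_Integration.integral_diff[OF i1 i0]
          by (simp add: left_diff_distrib)
        also have "\<dots> = integral\<^sup>L lborel (\<lambda>y. (exp (\<i> * complex_of_real (rho * cosh y)) - 1)
             * complex_of_real (exp (- y * a))
           / (1 - exp (complex_of_real (-2 * y) - 2 * \<i> * complex_of_real chi)))"
          by (simp add: F_def times_divide_eq_right)
        finally have eq: "I_alpha a rho chi - I_alpha a 0 chi = \<dots>" .
        have "cmod (integral\<^sup>L lborel (\<lambda>y. (exp (\<i> * complex_of_real (rho * cosh y)) - 1)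
             * complex_of_real (exp (- y * a))
           / (1 - exp (complex_of_real (-2 * y) - 2 * \<i> * complex_of_real chi))))
           \<le> (2 * rho powr eps) * Cst a eps"
        proof (rule main(2)[OF a e chi])
          show "(\<lambda>y. exp (\<i> * complex_of_real (rho * cosh y)) - 1) \<in> borel_measurable borel"
            using meas[of rho] by measurable
          show "(\<lambda>y. exp (\<i> * complex_of_real (rho * cosh y)) - 1) (- y)
              = (\<lambda>y. exp (\<i> * complex_of_real (rho * cosh y)) - 1) y" for y by simp
          show "cmod ((\<lambda>y. exp (\<i> * complex_of_real (rho * cosh y)) - 1) y)
              \<le> (2 * rho powr eps) * exp (eps * \<bar>y\<bar>)" for y
            using kb2[OF r e(1), of y] e a by simp
        qed
        then show "cmod (I_alpha a rho chi - I_alpha a 0 chi) \<le> (2 * Cst a eps) * rho powr eps"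
          unfolding eq by (simp add: algebra_simps)
      qed
    qed
  qed
qed

end
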